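(* Let $n$ be a positive integer and let $D(n)=[d_{i,j}]_{i,j=1}^n$ be the matrix with $d_{i,j}=F_i$ if $i\mid j$ and $d_{i,j}=0$ otherwise. Then $D(n)$ is invertible and $D(n)^{-1}=[\tilde d_{i,j}]_{i,j=1}^n$, where \[ \tilde d_{i,j}=\begin{cases}\dfrac{1}{F_j}\,\mu\!\left(\dfrac{j}{i}\right) & \text{if } i\mid j,\\[2mm] 0 & \text{otherwise}.\end{cases} \]
   Context: The Fibonacci numbers are $F_1=F_2=1$, $F_n=F_{n-1}+F_{n-2}$ for $n\ge 3$. $\mu$ denotes the Möbius function: $\mu(1)=1$, $\mu(j)=0$ if $j$ has a repeated prime factor, and $\mu(j)=(-1)^k$ if $j$ is a product of $k$ distinct primes. *)

theory Defs
  imports "Jordan_Normal_Form.Matrix" "HOL-Number_Theory.Fib" "HOL-Computational_Algebra.Squarefree"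
begin

definition moebius :: "nat \<Rightarrow> int" where
  "moebius j = (if squarefree j then (-1) ^ card (prime_factors j) else 0)"

text \<open>D(n): 1-based entries d_{i,j} = F_i if i dvd j, else 0; stored 0-based.\<close>
definition Dmat :: "nat \<Rightarrow> real mat" where
  "Dmat n = mat n n (\<lambda>(i, j). if Suc i dvd Suc j then real (fib (Suc i)) else 0)"

definition Dinv :: "nat \<Rightarrow> real mat" where
  "Dinv n = mat n n (\<lambda>(i, j). if Suc i dvd Suc j
      then (1 / real (fib (Suc j))) * real_of_int (moebius (Suc j div Suc i)) else 0)"

end

theory Submission
  imports Defs
begin

lemma alt_pow_sum:
  assumes "finite A" "A \<noteq> {}"
  shows "(\<Sum>X\<in>Pow A. (-1::int) ^ card X) = 0"
proof -
  have "(\<Prod>x\<in>A. (1::int) - 1) = (\<Sum>X\<in>Pow A. (-1) ^ card X * (\<Prod>x\<in>X. 1) * (\<Prod>x\<in>A-X. 1))"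
    by (rule prod_diff_conv_sum[OF assms(1)])
  moreover have "(\<Prod>x\<in>A. (1::int) - 1) = 0" using assms by (simp add: card_gt_0_iff)
  ultimately show ?thesis by simp
qed

lemma sqf_prod_props:
  fixes m :: nat
  assumes m: "m > 0" and S: "S \<subseteq> prime_factors m"
  shows "prime_factors (\<Prod>S) = S" "\<Prod>S dvd m" "squarefree (\<Prod>S)"
proof -
  have fin: "finite S" using S finite_subset by blast
  have pr: "\<And>p. p \<in> S \<Longrightarrow> prime p" using S by auto
  have pf: "prime_factorization (\<Prod>S) = mset_set S"
  proof -
    have "\<Prod>S = prod_mset (mset_set S)" by (simp add: prod_unfold_prod_mset)
    then show ?thesis using prime_factorization_prod_mset_primes[of "mset_set S"] pr fin by simp
  qed
  then show "prime_factors (\<Prod>S) = S" using fin by simp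
  have nz: "\<Prod>S \<noteq> 0" using pr fin by (metis not_prime_0 prod_zero_iff)
  have "mset_set S \<subseteq># prime_factorization m"
    using S fin by (meson finite_set_mset mset_set_set_mset_msubset subset_imp_msubset_mset_set subset_mset.order_trans)
  then show "\<Prod>S dvd m" using pf nz m by (metis prime_factorization_subset_iff_dvd not_gr0)
  show "squarefree (\<Prod>S)"
    apply (rule squarefree_prod_coprime)
    using pr by (auto intro: primes_coprime squarefree_prime)
qed

lemma sqf_eq_prod:
  fixes d :: nat
  assumes "squarefree d"
  shows "\<Prod>(prime_factors d) = d"
proof -
  have nz: "d \<noteq> 0" using assms by (metis not_squarefree_0)
  have "(\<Prod>p \<in> prime_factors d. p ^ multiplicity p d) = d"
    using prod_prime_factors[OF nz] nz by simp
  moreover have "(\<Prod>p \<in> prime_factors d. p ^ multiplicity p d) = \<Prod>(prime_factors d)"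
    using assms nz squarefree_factorial_semiring'[OF nz] by (intro prod.cong) auto
  ultimately show ?thesis by simp
qed

lemma moebius_divisor_sum:
  fixes m :: nat
  assumes m: "m > 0"
  shows "(\<Sum>d | d dvd m. moebius d) = (if m = 1 then 1 else 0)"
proof -
  let ?P = "prime_factors m"
  have finD: "finite {d. d dvd m}" using m by simp
  have "(\<Sum>d | d dvd m. moebius d) = (\<Sum>d | d dvd m \<and> squarefree d. moebius d)"
    using finD by (intro sum.mono_neutral_right) (auto simp: moebius_def)
  also have "{d. d dvd m \<and> squarefree d} = Prod ` Pow ?P"
  proof
    show "{d. d dvd m \<and> squarefree d} \<subseteq> Prod ` Pow ?P"
    proof
      fix d assume d: "d \<in> {d. d dvd m \<and> squarefree d}"
      then have "d = \<Prod>(prime_factors d)" using sqf_eq_prod by simp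
      moreover have "prime_factors d \<subseteq> ?P" using d m by (intro dvd_prime_factors) auto
      ultimately show "d \<in> Prod ` Pow ?P" by blast
    qed
    show "Prod ` Pow ?P \<subseteq> {d. d dvd m \<and> squarefree d}"
      using sqf_prod_props[OF m] by auto
  qed
  also have "(\<Sum>d \<in> Prod ` Pow ?P. moebius d) = (\<Sum>S \<in> Pow ?P. moebius (\<Prod>S))"
  proof -
    have "inj_on Prod (Pow ?P)"
      by (rule inj_on_inverseI[where g = prime_factors]) (use sqf_prod_props[OF m] in auto)
    then show ?thesis by (simp add: sum.reindex)
  qed
  also have "\<dots> = (\<Sum>S \<in> Pow ?P. (-1) ^ card S)"
    using sqf_prod_props[OF m] by (intro sum.cong) (auto simp: moebius_def)
  also have "\<dots> = (if m = 1 then 1 else 0)"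
  proof (cases "m = 1")
    case True then show ?thesis by simp
  next
    case False
    then have "?P \<noteq> {}" using m by (metis prime_factorization_empty_iff set_mset_eq_empty_iff not_gr0 nat_dvd_1_iff_1)
    then show ?thesis using False alt_pow_sum[of ?P] by simp
  qed
  finally show ?thesis .
qed

lemma dvd_interval_B:
  fixes a b :: nat
  assumes a: "a > 0" and b: "b > 0" and ab: "a dvd b"
  shows "(\<Sum>k | a dvd k \<and> k dvd b. moebius (k div a)) = (if a = b then 1 else 0)"
proof -
  obtain q where q: "b = a * q" using ab by blast
  have qp: "q > 0" using q b by auto
  have "{k. a dvd k \<and> k dvd b} = (\<lambda>e. a * e) ` {e. e dvd q}"
    using q a by (auto simp: image_iff)
  moreover have "inj_on (\<lambda>e. a * e) {e. e dvd q}" using a by (auto intro: inj_onI)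
  ultimately have "(\<Sum>k | a dvd k \<and> k dvd b. moebius (k div a)) = (\<Sum>e | e dvd q. moebius (a * e div a))"
    by (simp add: sum.reindex)
  also have "\<dots> = (\<Sum>e | e dvd q. moebius e)" using a by simp
  also have "\<dots> = (if q = 1 then 1 else 0)" using moebius_divisor_sum[OF qp] .
  also have "(q = 1) = (a = b)" using q a by auto
  finally show ?thesis .
qed

lemma dvd_interval_A:
  fixes a b :: nat
  assumes a: "a > 0" and b: "b > 0" and ab: "a dvd b"
  shows "(\<Sum>k | a dvd k \<and> k dvd b. moebius (b div k)) = (if a = b then 1 else 0)"
proof -
  have key: "a * b div (a * b div k) = k \<and> a * b div k \<in> {k. a dvd k \<and> k dvd b} \<and>
       moebius (a * b div k div a) = moebius (b div k)" if k: "k \<in> {k. a dvd k \<and> k dvd b}" for k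
  proof -
    from k obtain u v where u: "k = a * u" and v: "b = k * v" by blast
    have uv: "u > 0" "v > 0" using u v b by auto
    have "a * b div k = a * v" using u v a uv by (simp add: mult.assoc)
    moreover have "a * b div (a * v) = k" using u v a b uv by (auto simp: mult.commute)
    ultimately show ?thesis
      using u v a b uv by (auto simp: mult.commute mult.left_commute)
  qed
  have "(\<Sum>k | a dvd k \<and> k dvd b. moebius (b div k)) = (\<Sum>k | a dvd k \<and> k dvd b. moebius (k div a))"
    by (rule sum.reindex_bij_witness[where i = "\<lambda>k. (a * b) div k" and j = "\<lambda>k. (a * b) div k"])
       (use key in auto)
  then show ?thesis using dvd_interval_B[OF assms] by simp
qed

lemma sum_reindex_dvd:
  fixes g :: "nat \<Rightarrow> real"
  assumes j: "j < n"
  shows "(\<Sum>k\<in>{0..<n}. if Suc i dvd Suc k \<and> Suc k dvd Suc j then g (Suc k) else 0)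
       = (\<Sum>k | Suc i dvd k \<and> k dvd Suc j. g k)"
proof -
  have "(\<Sum>k\<in>{0..<n}. if Suc i dvd Suc k \<and> Suc k dvd Suc j then g (Suc k) else 0)
      = (\<Sum>k\<in>{k. k < n \<and> Suc i dvd Suc k \<and> Suc k dvd Suc j}. g (Suc k))"
    by (simp add: sum.If_cases Int_def conj_commute atLeast0LessThan)
  also have "\<dots> = (\<Sum>k \<in> Suc ` {k. k < n \<and> Suc i dvd Suc k \<and> Suc k dvd Suc j}. g k)"
    by (simp add: sum.reindex)
  also have "Suc ` {k. k < n \<and> Suc i dvd Suc k \<and> Suc k dvd Suc j} = {k. Suc i dvd k \<and> k dvd Suc j}"
  proof (rule equalityI)
    show "Suc ` {k. k < n \<and> Suc i dvd Suc k \<and> Suc k dvd Suc j} \<subseteq> {k. Suc i dvd k \<and> k dvd Suc j}" by auto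
  next
    show "{k. Suc i dvd k \<and> k dvd Suc j} \<subseteq> Suc ` {k. k < n \<and> Suc i dvd Suc k \<and> Suc k dvd Suc j}"
    proof
    fix k assume "k \<in> {k. Suc i dvd k \<and> k dvd Suc j}"
    then have "Suc i dvd k" "k dvd Suc j" by auto
    moreover then have "k \<le> Suc j" "k > 0" using dvd_imp_le by (auto intro: Nat.gr0I)
    ultimately show "k \<in> Suc ` {k. k < n \<and> Suc i dvd Suc k \<and> Suc k dvd Suc j}"
      using j by (auto simp: image_iff intro!: exI[of _ "k - 1"])
    qed
  qed
  finally show ?thesis .
qed

lemma DDinv: "Dmat n * Dinv n = 1\<^sub>m n"
proof (rule eq_matI)
  show "dim_row (Dmat n * Dinv n) = dim_row (1\<^sub>m n)" by (simp add: Dmat_def)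
  show "dim_col (Dmat n * Dinv n) = dim_col (1\<^sub>m n)" by (simp add: Dinv_def)
  fix i j assume i: "i < dim_row (1\<^sub>m n)" and j: "j < dim_col (1\<^sub>m n)"
  then have i: "i < n" and j: "j < n" by auto
  let ?c = "real (fib (Suc i)) / real (fib (Suc j))"
  have "(Dmat n * Dinv n) $$ (i, j) = (\<Sum>k\<in>{0..<n}. (if Suc i dvd Suc k then real (fib (Suc i)) else 0) *
     (if Suc k dvd Suc j then (1 / real (fib (Suc j))) * real_of_int (moebius (Suc j div Suc k)) else 0))"
    using i j by (simp add: Dmat_def Dinv_def scalar_prod_def)
  also have "\<dots> = (\<Sum>k\<in>{0..<n}. if Suc i dvd Suc k \<and> Suc k dvd Suc j then
      ?c * real_of_int (moebius (Suc j div Suc k)) else 0)"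
    by (intro sum.cong) auto
  also have "\<dots> = (\<Sum>k | Suc i dvd k \<and> k dvd Suc j. ?c * real_of_int (moebius (Suc j div k)))"
    using sum_reindex_dvd[OF j, of i "\<lambda>k. ?c * real_of_int (moebius (Suc j div k))"] by simp
  also have "\<dots> = ?c * real_of_int (\<Sum>k | Suc i dvd k \<and> k dvd Suc j. moebius (Suc j div k))"
    by (simp add: sum_distrib_left)
  also have "\<dots> = 1\<^sub>m n $$ (i, j)"
  proof (cases "Suc i dvd Suc j")
    case True
    show ?thesis using dvd_interval_A[OF _ _ True] i j fib_neq_0_nat[of "Suc j"] by simp
  next
    case False
    then have E: "{k. Suc i dvd k \<and> k dvd Suc j} = {}" using dvd_trans by blast
    have "i \<noteq> j" using False by auto
    then show ?thesis using i j by (simp add: E)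
  qed
  finally show "(Dmat n * Dinv n) $$ (i, j) = 1\<^sub>m n $$ (i, j)" .
qed

lemma DinvD: "Dinv n * Dmat n = 1\<^sub>m n"
proof (rule eq_matI)
  show "dim_row (Dinv n * Dmat n) = dim_row (1\<^sub>m n)" by (simp add: Dinv_def)
  show "dim_col (Dinv n * Dmat n) = dim_col (1\<^sub>m n)" by (simp add: Dmat_def)
  fix i j assume i: "i < dim_row (1\<^sub>m n)" and j: "j < dim_col (1\<^sub>m n)"
  then have i: "i < n" and j: "j < n" by auto
  have "(Dinv n * Dmat n) $$ (i, j) = (\<Sum>k\<in>{0..<n}.
     (if Suc i dvd Suc k then (1 / real (fib (Suc k))) * real_of_int (moebius (Suc k div Suc i)) else 0) *
     (if Suc k dvd Suc j then real (fib (Suc k)) else 0))"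
    using i j by (simp add: Dmat_def Dinv_def scalar_prod_def)
  also have "\<dots> = (\<Sum>k\<in>{0..<n}. if Suc i dvd Suc k \<and> Suc k dvd Suc j then
      real_of_int (moebius (Suc k div Suc i)) else 0)"
    using fib_neq_0_nat by (intro sum.cong) auto
  also have "\<dots> = (\<Sum>k | Suc i dvd k \<and> k dvd Suc j. real_of_int (moebius (k div Suc i)))"
    using sum_reindex_dvd[OF j, of i "\<lambda>k. real_of_int (moebius (k div Suc i))"] by simp
  also have "\<dots> = real_of_int (\<Sum>k | Suc i dvd k \<and> k dvd Suc j. moebius (k div Suc i))"
    by simp
  also have "\<dots> = 1\<^sub>m n $$ (i, j)"
  proof (cases "Suc i dvd Suc j")
    case True
    show ?thesis using dvd_interval_B[OF _ _ True] i j by simp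
  next
    case False
    then have E: "{k. Suc i dvd k \<and> k dvd Suc j} = {}" using dvd_trans by blast
    have "i \<noteq> j" using False by auto
    then show ?thesis using i j by (simp add: E)
  qed
  finally show "(Dinv n * Dmat n) $$ (i, j) = 1\<^sub>m n $$ (i, j)" .
qed

theorem lemma1:
  fixes n :: nat
  assumes "n \<ge> 1"
  shows "invertible_mat (Dmat n) \<and> Dmat n * Dinv n = 1\<^sub>m n \<and> Dinv n * Dmat n = 1\<^sub>m n"
  using DDinv[of n] DinvD[of n]
  by (auto simp: invertible_mat_def inverts_mat_def Dmat_def Dinv_def)

end
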